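(* Let $S\colon\{0,1\}^n\to\{0,1\}^n$ be a polynomial-size circuit that is a YES instance of \textsc{Succinct Graph Reachability}, and let $V$, $\mathrm{Enc}$, $\ell=\ell(n)$, $p=p(n)$, $\sigma^{\mathsf{start}}$, $\sigma^{\mathsf{goal}}$ be as described in the context. Then there exists a reconfiguration sequence $\sigma$ from $\sigma^{\mathsf{start}}$ to $\sigma^{\mathsf{goal}}$ over $\{0,1,\bot\}^{2\ell(n)+p(n)}$ such that $V(S)$ accepts every proof in $\sigma$ with probability $1$.
   Context: \textsc{Succinct Graph Reachability}: given a polynomial-size circuit $S\colon\{0,1\}^n\to\{0,1\}^n$ with $S(1^n)=1^n$, decide whether there is a sequence $(\alpha^{(1)},\ldots,\alpha^{(T)})$ in $\{0,1\}^n$ from $0^n$ to $1^n$ such that for all $t<T$: $\alpha^{(t)}=\alpha^{(t+1)}$ or $S(\alpha^{(t)})=\alpha^{(t+1)}$ or $S(\alpha^{(t+1)})=\alpha^{(t)}$; YES instances are those where such a sequence exists. For strings $f,g$ of equal length, $\Delta(f,g)$ is the fraction of positions where they differ; for a set $A$, $\Delta(f,A)=\min_{g\in A}\Delta(f,g)$; $f$ is $\epsilon$-close to $A$ if $\Delta(f,A)\le\epsilon$ and $\epsilon$-far otherwise. $\bot$ is a symbol distinct from $0,1$; $\circ$ denotes concatenation; $f|_I$ denotes the restriction of $f$ to positions $I$. Setting: $\mathrm{Enc}\colon\{0,1\}^n\to\{0,1\}^{\ell(n)}$, $\ell(n)=n^{1+o(1)}$, is an error-correcting code with relative distance $\rho\in(0,1)$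 (i.e. $\Delta(\mathrm{Enc}(\alpha),\mathrm{Enc}(\beta))>\rho$ for $\alpha\ne\beta$), with set of codewords $\mathrm{Enc}(\cdot)$, having a local tester $M$: a probabilistic polynomial-time algorithm making $O(1)$ nonadaptive queries to $f\in\{0,1\}^{\ell(n)}$ that always accepts codewords and rejects every $f$ with probability at least $\kappa\cdot\Delta(f,\mathrm{Enc}(\cdot))$ (for a constant $\kappa>0$); when run on a string over $\{0,1,\bot\}$, $M$ rejects whenever it reads $\bot$. Let $L_{\mathrm{ckt}}(S)=\{\mathrm{Enc}(\alpha)\circ\mathrm{Enc}(\beta) : \alpha=\beta \text{ or } S(\alpha)=\beta \text{ or } S(\beta)=\alpha\}$. Let $V_{\mathrm{ckt}}$ be a smooth PCP-of-proximity verifier for the pair language $\{(S,f\circ g): f\circ g\in L_{\mathrm{ckt}}(S)\}$ with $O(\log n)$ randomness, query complexity $q$, proximity parameter $\rho/4$, soundness error $s_{\mathrm{ckt}}\in(0,1)$, and proof length $p(n)$: on explicit input $S$ it generates a query tuple $I$ into $f\circ g\circ\pi$ and a circuit $D$; if $f\circ g\in L_{\mathrm{ckt}}(S)$ some proof $\pi$ is accepted with probability $1$; if $f\circ g$ is $(\rho/4)$-far from $L_{\mathrm{ckt}}(S)$, every $\pi$ is accepted with probability $<s_{\mathrm{ckt}}$; and every position of $f\circ g\circ\pi$ is queried with the same probability. For $\mathrm{Enc}(\alpha)\circ\mathrm{Enc}(\beta)\in L_{\mathrm{ckt}}(S)$, $\Pi(\alpha,\beta)\in\{0,1\}^{p(n)}$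 is a (polynomial-time computable) proof such that $V_{\mathrm{ckt}}(S)$ accepts $\mathrm{Enc}(\alpha)\circ\mathrm{Enc}(\beta)\circ\Pi(\alpha,\beta)$ with probability $1$. Verifier $V(S)$ with oracle access to $f\circ g\circ\pi\in\{0,1,\bot\}^{\ell(n)}\times\{0,1,\bot\}^{\ell(n)}\times\{0,1,\bot\}^{p(n)}$: (1) run $M$ on $f$ and on $g$; if both runs reject, reject. (2) Pick $i,j\in\{1,\ldots,\ell(n)\}$ independently and uniformly. If $f_i=\bot$ or $g_j=\bot$, accept. (3) Otherwise, run $V_{\mathrm{ckt}}(S)$ to obtain $(I,D)$; if $(f\circ g)|_I$ contains $\bot$, accept; else if $\pi|_I$ contains no $\bot$ and $D((f\circ g\circ\pi)|_I)=1$, accept; otherwise reject. Define $\sigma^{\mathsf{start}}=\mathrm{Enc}(0^n)\circ\mathrm{Enc}(0^n)\circ\Pi(0^n,0^n)$ and $\sigma^{\mathsf{goal}}=\mathrm{Enc}(1^n)\circ\mathrm{Enc}(1^n)\circ\Pi(1^n,1^n)$. A reconfiguration sequence over $\{0,1,\bot\}^N$ from $\sigma^{\mathsf{start}}$ to $\sigma^{\mathsf{goal}}$ is a finite sequence of strings in $\{0,1,\bot\}^N$ starting at $\sigma^{\mathsf{start}}$, ending at $\sigma^{\mathsf{goal}}$, with consecutive strings differing in at most one position. *)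

theory Defs
  imports "HOL-Probability.Probability"
begin

text \<open>Symbols of {0,1,bot} are modelled as bool option; None is bot. A randomized nonadaptive query procedure is a
  pmf over pairs (query tuple, decision predicate on the queried values).\<close>

type_synonym qproc = "(nat list \<times> (bool list \<Rightarrow> bool)) pmf"

definition rel_dist :: "'a list \<Rightarrow> 'a list \<Rightarrow> real" where
  "rel_dist f g = real (card {i. i < length f \<and> f ! i \<noteq> g ! i}) / real (length f)"

definition dist_to :: "'a list \<Rightarrow> 'a list set \<Rightarrow> real" where
  "dist_to f A = (INF g\<in>A. rel_dist f g)"

definition codewords :: "nat \<Rightarrow> (bool list \<Rightarrow> bool list) \<Rightarrow> bool list set" where
  "codewords n Enc = Enc ` {a. length a = n}"

definition is_code :: "nat \<Rightarrow> nat \<Rightarrow> real \<Rightarrow> (bool list \<Rightarrow> bool list) \<Rightarrow> bool" where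
  "is_code n l \<rho> Enc \<longleftrightarrow>
     (\<forall>a. length a = n \<longrightarrow> length (Enc a) = l) \<and>
     (\<forall>a b. length a = n \<longrightarrow> length b = n \<longrightarrow> a \<noteq> b \<longrightarrow> rel_dist (Enc a) (Enc b) > \<rho>)"

definition run_test :: "bool option list \<Rightarrow> nat list \<times> (bool list \<Rightarrow> bool) \<Rightarrow> bool" where
  "run_test x qd = (case qd of (Q, d) \<Rightarrow>
      (\<forall>k\<in>set Q. x ! k \<noteq> None) \<and> d (map (\<lambda>k. the (x ! k)) Q))"

definition is_local_tester ::
  "nat \<Rightarrow> nat \<Rightarrow> (bool list \<Rightarrow> bool list) \<Rightarrow> real \<Rightarrow> qproc \<Rightarrow> bool" where
  "is_local_tester n l Enc \<kappa> M \<longleftrightarrow>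
     (\<forall>qd\<in>set_pmf M. set (fst qd) \<subseteq> {..<l}) \<and>
     (\<forall>a. length a = n \<longrightarrow> measure_pmf.prob M {qd. run_test (map Some (Enc a)) qd} = 1) \<and>
     (\<forall>f. length f = l \<longrightarrow>
        1 - measure_pmf.prob M {qd. run_test (map Some f) qd} \<ge> \<kappa> * dist_to f (codewords n Enc))"

definition ckt_step :: "(bool list \<Rightarrow> bool list) \<Rightarrow> bool list \<Rightarrow> bool list \<Rightarrow> bool" where
  "ckt_step S a b \<longleftrightarrow> a = b \<or> S a = b \<or> S b = a"

definition L_ckt :: "nat \<Rightarrow> (bool list \<Rightarrow> bool list) \<Rightarrow> (bool list \<Rightarrow> bool list) \<Rightarrow> bool list set" where
  "L_ckt n Enc S = {Enc a @ Enc b | a b. length a = n \<and> length b = n \<and> ckt_step S a b}"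

definition run_pcpp :: "bool list \<Rightarrow> nat list \<times> (bool list \<Rightarrow> bool) \<Rightarrow> bool" where
  "run_pcpp x c = (case c of (I, D) \<Rightarrow> D (map (\<lambda>k. x ! k) I))"

definition is_pcpp ::
  "nat \<Rightarrow> nat \<Rightarrow> nat \<Rightarrow> nat \<Rightarrow> real \<Rightarrow> real \<Rightarrow> (bool list \<Rightarrow> bool list) \<Rightarrow>
   (bool list \<Rightarrow> bool list) \<Rightarrow> qproc \<Rightarrow> bool" where
  "is_pcpp n l p q \<rho> s Enc S Vckt \<longleftrightarrow>
     (\<forall>c\<in>set_pmf Vckt. set (fst c) \<subseteq> {..<2*l+p} \<and> length (fst c) \<le> q) \<and>
     (\<forall>w\<in>L_ckt n Enc S. \<exists>\<pi>. length \<pi> = p \<and>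
         measure_pmf.prob Vckt {c. run_pcpp (w @ \<pi>) c} = 1) \<and>
     (\<forall>w \<pi>. length w = 2*l \<longrightarrow> length \<pi> = p \<longrightarrow> dist_to w (L_ckt n Enc S) > \<rho>/4 \<longrightarrow>
         measure_pmf.prob Vckt {c. run_pcpp (w @ \<pi>) c} < s) \<and>
     (\<forall>k k'. k < 2*l+p \<longrightarrow> k' < 2*l+p \<longrightarrow>
         measure_pmf.prob Vckt {c. k \<in> set (fst c)} = measure_pmf.prob Vckt {c. k' \<in> set (fst c)})"

text \<open>Decision of V on x = f o g o pi given all random choices.\<close>
definition V_decide ::
  "nat \<Rightarrow> bool option list \<Rightarrow> nat list \<times> (bool list \<Rightarrow> bool) \<Rightarrow> nat list \<times> (bool list \<Rightarrow> bool)
   \<Rightarrow> nat \<Rightarrow> nat \<Rightarrow> nat list \<times> (bool list \<Rightarrow> bool) \<Rightarrow> bool" where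
  "V_decide l x qf qg i j c =
    (let f = take l x; g = take l (drop l x) in
     if \<not> run_test f qf \<and> \<not> run_test g qg then False
     else if f ! i = None \<or> g ! j = None then True
     else (case c of (I, D) \<Rightarrow>
       if (\<exists>k\<in>set I. k < 2*l \<and> x ! k = None) then True
       else (\<forall>k\<in>set I. x ! k \<noteq> None) \<and> D (map (\<lambda>k. the (x ! k)) I)))"

definition V_run :: "nat \<Rightarrow> qproc \<Rightarrow> qproc \<Rightarrow> bool option list \<Rightarrow> bool pmf" where
  "V_run l M Vckt x =
     bind_pmf M (\<lambda>qf. bind_pmf M (\<lambda>qg.
     bind_pmf (pmf_of_set {..<l}) (\<lambda>i. bind_pmf (pmf_of_set {..<l}) (\<lambda>j.
     bind_pmf Vckt (\<lambda>c. return_pmf (V_decide l x qf qg i j c))))))"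

definition SGR_yes :: "nat \<Rightarrow> (bool list \<Rightarrow> bool list) \<Rightarrow> bool" where
  "SGR_yes n S \<longleftrightarrow> (\<exists>as. as \<noteq> [] \<and> hd as = replicate n False \<and> last as = replicate n True \<and>
      (\<forall>a\<in>set as. length a = n) \<and>
      (\<forall>t. Suc t < length as \<longrightarrow> ckt_step S (as ! t) (as ! Suc t)))"

definition reconf_seq :: "nat \<Rightarrow> 'a list \<Rightarrow> 'a list \<Rightarrow> 'a list list \<Rightarrow> bool" where
  "reconf_seq N s t \<sigma> \<longleftrightarrow> \<sigma> \<noteq> [] \<and> hd \<sigma> = s \<and> last \<sigma> = t \<and> (\<forall>x\<in>set \<sigma>. length x = N) \<and>
     (\<forall>i. Suc i < length \<sigma> \<longrightarrow> card {k. k < N \<and> \<sigma> ! i ! k \<noteq> \<sigma> ! Suc i ! k} \<le> 1)"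

end

theory Submission
  imports Defs
begin

lemma prob1_support:
  fixes p :: "'a pmf"
  assumes "measure_pmf.prob p A = 1" "x \<in> set_pmf p" shows "x \<in> A"
  using assms by (subst (asm) measure_pmf.prob_eq_1) (auto simp: AE_measure_pmf_iff)

lemma V_run_1:
  assumes "0 < l"
    and "\<forall>qf\<in>set_pmf M. \<forall>qg\<in>set_pmf M. \<forall>i<l. \<forall>j<l. \<forall>c\<in>set_pmf Vckt. V_decide l x qf qg i j c"
  shows "pmf (V_run l M Vckt x) True = 1"
proof -
  have "set_pmf (V_run l M Vckt x) \<subseteq> {True}"
  proof -
    have "set_pmf (pmf_of_set {..<l}) = {..<l}" using assms(1) by (simp add: lessThan_empty_iff)
    then show ?thesis using assms(2) by (auto simp: V_run_def set_bind_pmf)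
  qed
  then have "V_run l M Vckt x = return_pmf True" by (simp add: set_pmf_subset_singleton)
  then show ?thesis by simp
qed

definition adj :: "nat \<Rightarrow> 'a list \<Rightarrow> 'a list \<Rightarrow> bool" where
  "adj N a b \<longleftrightarrow> card {k. k < N \<and> a ! k \<noteq> b ! k} \<le> 1"

lemma reconf_alt:
  "reconf_seq N s t \<sigma> \<longleftrightarrow> \<sigma> \<noteq> [] \<and> hd \<sigma> = s \<and> last \<sigma> = t \<and> (\<forall>x\<in>set \<sigma>. length x = N) \<and>
     successively (adj N) \<sigma>"
  unfolding reconf_seq_def successively_conv_nth adj_def by blast

definition goodseq :: "nat \<Rightarrow> 'a list \<Rightarrow> 'a list \<Rightarrow> ('a list \<Rightarrow> bool) \<Rightarrow> bool" where
  "goodseq N x y P \<longleftrightarrow> (\<exists>\<sigma>. reconf_seq N x y \<sigma> \<and> (\<forall>z\<in>set \<sigma>. P z))"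

lemma goodseq_trans:
  assumes "goodseq N x y P" "goodseq N y z P" shows "goodseq N x z P"
proof -
  obtain s1 where s1: "reconf_seq N x y s1" "\<forall>z\<in>set s1. P z" using assms(1) goodseq_def by blast
  obtain s2 where s2: "reconf_seq N y z s2" "\<forall>z\<in>set s2. P z" using assms(2) goodseq_def by blast
  have "adj N y y" by (simp add: adj_def)
  then have "reconf_seq N x z (s1 @ s2)"
    using s1(1) s2(1) unfolding reconf_alt by (auto simp: successively_append_iff)
  then show ?thesis using s1 s2 goodseq_def by fastforce
qed

lemma goodseq_refl:
  assumes "length x = N" "P x" shows "goodseq N x x P"
  unfolding goodseq_def reconf_alt using assms by (intro exI[of _ "[x]"]) auto

lemma walk:
  assumes lx: "length x = N" and ly: "length y = N"
    and Rx: "\<forall>k<N. R k (x ! k)" and Ry: "\<forall>k<N. R k (y ! k)"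
    and P: "\<And>z. length z = N \<Longrightarrow> \<forall>k<N. R k (z ! k) \<Longrightarrow> P z"
  shows "goodseq N x y P"
proof -
  define zm where "zm m = map (\<lambda>k. if k < m then y ! k else x ! k) [0..<N]" for m
  define \<sigma> where "\<sigma> = map zm [0..<Suc N]"
  have lz: "length (zm m) = N" for m by (simp add: zm_def)
  have nz: "k < N \<Longrightarrow> zm m ! k = (if k < m then y ! k else x ! k)" for m k by (simp add: zm_def)
  have z0: "zm 0 = x" by (rule nth_equalityI) (auto simp: lz lx nz)
  have zN: "zm N = y" by (rule nth_equalityI) (auto simp: lz ly nz)
  have "successively (adj N) \<sigma>"
    unfolding successively_conv_nth
  proof (intro allI impI)
    fix i assume "Suc i < length \<sigma>"
    then have i: "i < N" by (simp add: \<sigma>_def)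
    have "{k. k < N \<and> \<sigma> ! i ! k \<noteq> \<sigma> ! Suc i ! k} \<subseteq> {i}"
      using i by (auto simp: \<sigma>_def nz nth_append split: if_splits simp del: upt_Suc)
    then have "card {k. k < N \<and> \<sigma> ! i ! k \<noteq> \<sigma> ! Suc i ! k} \<le> card {i}"
      by (intro card_mono) auto
    then show "adj N (\<sigma> ! i) (\<sigma> ! Suc i)" by (simp add: adj_def)
  qed
  moreover have "hd \<sigma> = x" by (simp add: \<sigma>_def z0 hd_map del: upt_Suc)
  moreover have "last \<sigma> = y" by (simp add: \<sigma>_def zN last_map del: upt_Suc)
  moreover have "\<forall>z\<in>set \<sigma>. length z = N \<and> P z"
  proof
    fix z assume "z \<in> set \<sigma>"
    then obtain m where z: "z = zm m" by (auto simp: \<sigma>_def)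
    have "\<forall>k<N. R k (z ! k)" using Rx Ry by (auto simp: z nz)
    then show "length z = N \<and> P z" using P lz z by auto
  qed
  ultimately show ?thesis unfolding goodseq_def reconf_alt
    by (intro exI[of _ \<sigma>]) (auto simp: \<sigma>_def)
qed


theorem mainTheorem3:
  fixes n l p q :: nat and \<rho> \<kappa> s_ckt :: real
    and S Enc :: "bool list \<Rightarrow> bool list"
    and M Vckt :: qproc
    and PiPf :: "bool list \<Rightarrow> bool list \<Rightarrow> bool list"
  assumes "0 < n"
    and "\<forall>a. length a = n \<longrightarrow> length (S a) = n"
    and "S (replicate n True) = replicate n True"
    and "SGR_yes n S"
    and "0 < \<rho>" and "\<rho> < 1" and "is_code n l \<rho> Enc"
    and "0 < \<kappa>" and "is_local_tester n l Enc \<kappa> M"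
    and "0 < s_ckt" and "s_ckt < 1" and "is_pcpp n l p q \<rho> s_ckt Enc S Vckt"
    and "\<forall>a b. length a = n \<longrightarrow> length b = n \<longrightarrow> ckt_step S a b \<longrightarrow>
           length (PiPf a b) = p \<and>
           measure_pmf.prob Vckt {c. run_pcpp (Enc a @ Enc b @ PiPf a b) c} = 1"
  shows "\<exists>\<sigma>. reconf_seq (2*l+p)
            (map Some (Enc (replicate n False) @ Enc (replicate n False) @
                       PiPf (replicate n False) (replicate n False)))
            (map Some (Enc (replicate n True) @ Enc (replicate n True) @
                       PiPf (replicate n True) (replicate n True))) \<sigma> \<and>
          (\<forall>x\<in>set \<sigma>. pmf (V_run l M Vckt x) True = 1)"
proof -
  define N where "N = 2*l+p"
  define G where "G x \<longleftrightarrow> pmf (V_run l M Vckt x) True = 1" for x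
  have lenE: "\<And>a. length a = n \<Longrightarrow> length (Enc a) = l"
    using assms(7) by (simp add: is_code_def)
  have tester: "\<And>a qd. length a = n \<Longrightarrow> qd \<in> set_pmf M \<Longrightarrow> run_test (map Some (Enc a)) qd"
    using assms(9) prob1_support[of M "{qd. run_test (map Some (Enc _)) qd}"]
    unfolding is_local_tester_def by blast
  have pcI: "\<And>c. c \<in> set_pmf Vckt \<Longrightarrow> set (fst c) \<subseteq> {..<N}"
    using assms(12) by (simp add: is_pcpp_def N_def)
  have lenP: "\<And>a b. length a = n \<Longrightarrow> length b = n \<Longrightarrow> ckt_step S a b \<Longrightarrow> length (PiPf a b) = p"
    using assms(13) by blast
  have accw: "\<And>a b c. length a = n \<Longrightarrow> length b = n \<Longrightarrow> ckt_step S a b \<Longrightarrow> c \<in> set_pmf Vckt \<Longrightarrow>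
      run_pcpp (Enc a @ Enc b @ PiPf a b) c"
    using assms(13) prob1_support[of Vckt "{c. run_pcpp (Enc _ @ Enc _ @ PiPf _ _) c}"] by blast
  have lpos: "0 < l"
  proof (rule ccontr)
    assume "\<not> 0 < l"
    then have l0: "l = 0" by simp
    have "replicate n False \<noteq> replicate n True" using assms(1) by (cases n) auto
    then have "rel_dist (Enc (replicate n False)) (Enc (replicate n True)) > \<rho>"
      using assms(7) by (simp add: is_code_def)
    moreover have "length (Enc (replicate n False)) = 0" using lenE l0 by simp
    ultimately show False using assms(5) by (simp add: rel_dist_def)
  qed
  have L1: "G z" if a: "length a = n" and b: "length b = n" and ab: "ckt_step S a b"
    and lz: "length z = N"
    and R: "\<forall>k<N. (z!k = None \<or> z!k = Some ((Enc a @ Enc b @ PiPf a b)!k)) \<and> (2*l \<le> k \<longrightarrow> z!k \<noteq> None)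
            \<and> (if md then (k < l \<longrightarrow> z!k \<noteq> None) else (l \<le> k \<and> k < 2*l \<longrightarrow> z!k \<noteq> None))"
    for z a b md
  proof -
    define w where "w = Enc a @ Enc b @ PiPf a b"
    have la: "length (Enc a) = l" and lb: "length (Enc b) = l" using lenE a b by auto
    have tst: "run_test (take l z) qf \<or> run_test (take l (drop l z)) qg"
      if "qf \<in> set_pmf M" "qg \<in> set_pmf M" for qf qg
    proof (cases md)
      case True
      have "take l z = map Some (Enc a)"
      proof (rule nth_equalityI)
        show "length (take l z) = length (map Some (Enc a))" using lz la by (simp add: N_def)
        fix k assume "k < length (take l z)"
        then have k: "k < l" using lz by (simp add: N_def)
        have "k < N" using k by (simp add: N_def)
        from R[rule_format, OF this] True k have "z!k = Some (w!k)" unfolding w_def by auto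
        then show "take l z ! k = map Some (Enc a) ! k" using k la by (simp add: w_def nth_append)
      qed
      then show ?thesis using tester[OF a that(1)] by simp
    next
      case False
      have "take l (drop l z) = map Some (Enc b)"
      proof (rule nth_equalityI)
        show "length (take l (drop l z)) = length (map Some (Enc b))" using lz lb by (simp add: N_def)
        fix k assume "k < length (take l (drop l z))"
        then have k: "k < l" using lz by (simp add: N_def)
        have "l+k < N" using k by (simp add: N_def)
        from R[rule_format, OF this] False k have "z!(l+k) = Some (w!(l+k))" unfolding w_def by auto
        then show "take l (drop l z) ! k = map Some (Enc b) ! k" using k la lb lz
          by (simp add: w_def nth_append N_def)
      qed
      then show ?thesis using tester[OF b that(2)] by simp
    qed
    show ?thesis unfolding G_def
    proof (rule V_run_1[OF lpos], intro ballI allI impI)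
      fix qf qg i j c
      assume q: "qf \<in> set_pmf M" "qg \<in> set_pmf M" and c: "c \<in> set_pmf Vckt"
      obtain I D where cID: "c = (I, D)" by (cases c)
      have rp: "D (map (\<lambda>k. w ! k) I)" using accw[OF a b ab c] by (simp add: run_pcpp_def cID w_def)
      have zk: "z!k = Some (w!k)" if "k \<in> set I" "\<not> (\<exists>k\<in>set I. k < 2*l \<and> z!k = None)" for k
      proof -
        have kN: "k < N" using pcI[OF c] that(1) cID by auto
        have nn: "z!k \<noteq> None"
        proof (cases "k < 2*l")
          case True then show ?thesis using that by metis
        next
          case False then show ?thesis using R[rule_format, OF \<open>k < N\<close>] by simp
        qed
        show ?thesis using R[rule_format, OF kN] nn unfolding w_def by simp
      qed
      have mp: "(\<forall>k\<in>set I. z!k \<noteq> None) \<and> map (\<lambda>k. the (z!k)) I = map (\<lambda>k. w!k) I"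
        if h: "\<not> (\<exists>k\<in>set I. k < 2*l \<and> z!k = None)"
      proof -
        have all: "\<forall>k\<in>set I. z!k = Some (w!k)" using zk[OF _ h] by blast
        have "map (\<lambda>k. the (z!k)) I = map (\<lambda>k. w!k) I" by (rule map_cong) (simp_all add: all)
        then show ?thesis using all by simp
      qed
      have nb: "\<not> (\<not> run_test (take l z) qf \<and> \<not> run_test (take l (drop l z)) qg)" using tst[OF q] by blast
      show "V_decide l z qf qg i j c"
      proof (cases "take l z ! i = None \<or> take l (drop l z) ! j = None")
        case True then show ?thesis using nb unfolding V_decide_def Let_def cID by simp
      next
        case False
        show ?thesis
        proof (cases "\<exists>k\<in>set I. k < 2*l \<and> z!k = None")
          case True then show ?thesis using nb False unfolding V_decide_def Let_def cID by simp
        next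
          case F2: False
          have nn: "\<forall>k\<in>set I. z!k \<noteq> None" and eqm: "map (\<lambda>k. the (z!k)) I = map (\<lambda>k. w!k) I"
            using mp[OF F2] by auto
          show ?thesis using nb False F2 nn rp unfolding V_decide_def Let_def cID by (simp add: eqm)
        qed
      qed
    qed
  qed
  have L2: "G z" if a: "length a = n" and lz: "length z = N"
    and R: "\<forall>k<N. if md then (k < l \<longrightarrow> z!k = Some (Enc a ! k)) \<and> (l \<le> k \<and> k < 2*l \<longrightarrow> z!k = None)
              else (k < l \<longrightarrow> z!k = None) \<and> (l \<le> k \<and> k < 2*l \<longrightarrow> z!k = Some (Enc a ! (k - l)))"
    for z a md
  proof -
    have la: "length (Enc a) = l" using lenE a by auto
    show ?thesis unfolding G_def
    proof (rule V_run_1[OF lpos], intro ballI allI impI)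
      fix qf qg i j c
      assume q: "qf \<in> set_pmf M" "qg \<in> set_pmf M" and c: "c \<in> set_pmf Vckt" and i: "i < l" and j: "j < l"
      show "V_decide l z qf qg i j c"
      proof (cases md)
        case True
        have "take l z = map Some (Enc a)"
        proof (rule nth_equalityI)
          show "length (take l z) = length (map Some (Enc a))" using lz la by (simp add: N_def)
          fix k assume "k < length (take l z)"
          then have k: "k < l" using lz by (simp add: N_def)
          then show "take l z ! k = map Some (Enc a) ! k" using R True la by (simp add: N_def)
        qed
        moreover have "take l (drop l z) ! j = None"
          using R True j lz by (simp add: N_def)
        ultimately show ?thesis using tester[OF a q(1)] by (cases c) (simp add: V_decide_def Let_def)
      next
        case False
        have "take l (drop l z) = map Some (Enc a)"
        proof (rule nth_equalityI)
          show "length (take l (drop l z)) = length (map Some (Enc a))" using lz la by (simp add: N_def)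
          fix k assume "k < length (take l (drop l z))"
          then have k: "k < l" using lz by (simp add: N_def)
          then show "take l (drop l z) ! k = map Some (Enc a) ! k" using R False la lz
          proof -
            have "l+k < N" using k by (simp add: N_def)
            from R[rule_format, OF this] False k have "z!(l+k) = Some (Enc a ! k)" by simp
            then show ?thesis using k lz la by (simp add: N_def)
          qed
        qed
        moreover have "take l z ! i = None"
          using R False i lz by (simp add: N_def)
        ultimately show ?thesis using tester[OF a q(2)] by (cases c) (simp add: V_decide_def Let_def)
      qed
    qed
  qed
  have trans: "goodseq N (map Some (Enc a @ Enc a @ PiPf a a)) (map Some (Enc b @ Enc b @ PiPf b b)) G"
    if a: "length a = n" and b: "length b = n" and ab: "ckt_step S a b" for a b
  proof -
    have aa: "ckt_step S a a" and bb: "ckt_step S b b" by (simp_all add: ckt_step_def)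
    have lens: "length (Enc a) = l" "length (Enc b) = l" "length (PiPf a a) = p"
      "length (PiPf a b) = p" "length (PiPf b b) = p"
      using lenE lenP a b ab aa bb by auto
    define x0 where "x0 = map Some (Enc a @ Enc a @ PiPf a a)"
    define x1 where "x1 = map Some (Enc a) @ replicate l None @ map Some (PiPf a a)"
    define x2 where "x2 = map Some (Enc a) @ replicate l None @ map Some (PiPf a b)"
    define x3 where "x3 = map Some (Enc a @ Enc b @ PiPf a b)"
    define x4 where "x4 = replicate l None @ map Some (Enc b) @ map Some (PiPf a b)"
    define x5 where "x5 = replicate l None @ map Some (Enc b) @ map Some (PiPf b b)"
    define x6 where "x6 = map Some (Enc b @ Enc b @ PiPf b b)"
  have g1: "goodseq N x0 x1 G"
  proof (rule walk[where R="\<lambda>k v. (v = None \<or> v = Some ((Enc a @ Enc a @ PiPf a a) ! k)) \<and> (2*l \<le> k \<longrightarrow> v \<noteq> None) \<and> (if True then (k < l \<longrightarrow> v \<noteq> None) else (l \<le> k \<and> k < 2*l \<longrightarrow> v \<noteq> None))"])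
    show "length x0 = N" by (simp add: x0_def N_def lens)
    show "length x1 = N" by (simp add: x1_def N_def lens)
    show "\<forall>k<N. (\<lambda>k v. (v = None \<or> v = Some ((Enc a @ Enc a @ PiPf a a) ! k)) \<and> (2*l \<le> k \<longrightarrow> v \<noteq> None) \<and> (if True then (k < l \<longrightarrow> v \<noteq> None) else (l \<le> k \<and> k < 2*l \<longrightarrow> v \<noteq> None))) k (x0 ! k)" by (auto simp: x0_def N_def lens nth_append)
    show "\<forall>k<N. (\<lambda>k v. (v = None \<or> v = Some ((Enc a @ Enc a @ PiPf a a) ! k)) \<and> (2*l \<le> k \<longrightarrow> v \<noteq> None) \<and> (if True then (k < l \<longrightarrow> v \<noteq> None) else (l \<le> k \<and> k < 2*l \<longrightarrow> v \<noteq> None))) k (x1 ! k)" by (auto simp: x1_def N_def lens nth_append)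
    fix z assume zl: "length z = N" and zR: "\<forall>k<N. (\<lambda>k v. (v = None \<or> v = Some ((Enc a @ Enc a @ PiPf a a) ! k)) \<and> (2*l \<le> k \<longrightarrow> v \<noteq> None) \<and> (if True then (k < l \<longrightarrow> v \<noteq> None) else (l \<le> k \<and> k < 2*l \<longrightarrow> v \<noteq> None))) k (z ! k)"
    show "G z" using zR by (intro L1[OF a a aa zl, where md=True]) simp
  qed
  have g2: "goodseq N x1 x2 G"
  proof (rule walk[where R="\<lambda>k v. if True then (k < l \<longrightarrow> v = Some (Enc a ! k)) \<and> (l \<le> k \<and> k < 2*l \<longrightarrow> v = None) else (k < l \<longrightarrow> v = None) \<and> (l \<le> k \<and> k < 2*l \<longrightarrow> v = Some (Enc a ! (k - l)))"])
    show "length x1 = N" by (simp add: x1_def N_def lens)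
    show "length x2 = N" by (simp add: x2_def N_def lens)
    show "\<forall>k<N. (\<lambda>k v. if True then (k < l \<longrightarrow> v = Some (Enc a ! k)) \<and> (l \<le> k \<and> k < 2*l \<longrightarrow> v = None) else (k < l \<longrightarrow> v = None) \<and> (l \<le> k \<and> k < 2*l \<longrightarrow> v = Some (Enc a ! (k - l)))) k (x1 ! k)" by (auto simp: x1_def N_def lens nth_append)
    show "\<forall>k<N. (\<lambda>k v. if True then (k < l \<longrightarrow> v = Some (Enc a ! k)) \<and> (l \<le> k \<and> k < 2*l \<longrightarrow> v = None) else (k < l \<longrightarrow> v = None) \<and> (l \<le> k \<and> k < 2*l \<longrightarrow> v = Some (Enc a ! (k - l)))) k (x2 ! k)" by (auto simp: x2_def N_def lens nth_append)
    fix z assume zl: "length z = N" and zR: "\<forall>k<N. (\<lambda>k v. if True then (k < l \<longrightarrow> v = Some (Enc a ! k)) \<and> (l \<le> k \<and> k < 2*l \<longrightarrow> v = None) else (k < l \<longrightarrow> v = None) \<and> (l \<le> k \<and> k < 2*l \<longrightarrow> v = Some (Enc a ! (k - l)))) k (z ! k)"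
    show "G z" using zR by (intro L2[OF a zl, where md=True]) simp
  qed
  have g3: "goodseq N x2 x3 G"
  proof (rule walk[where R="\<lambda>k v. (v = None \<or> v = Some ((Enc a @ Enc b @ PiPf a b) ! k)) \<and> (2*l \<le> k \<longrightarrow> v \<noteq> None) \<and> (if True then (k < l \<longrightarrow> v \<noteq> None) else (l \<le> k \<and> k < 2*l \<longrightarrow> v \<noteq> None))"])
    show "length x2 = N" by (simp add: x2_def N_def lens)
    show "length x3 = N" by (simp add: x3_def N_def lens)
    show "\<forall>k<N. (\<lambda>k v. (v = None \<or> v = Some ((Enc a @ Enc b @ PiPf a b) ! k)) \<and> (2*l \<le> k \<longrightarrow> v \<noteq> None) \<and> (if True then (k < l \<longrightarrow> v \<noteq> None) else (l \<le> k \<and> k < 2*l \<longrightarrow> v \<noteq> None))) k (x2 ! k)" by (auto simp: x2_def N_def lens nth_append)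
    show "\<forall>k<N. (\<lambda>k v. (v = None \<or> v = Some ((Enc a @ Enc b @ PiPf a b) ! k)) \<and> (2*l \<le> k \<longrightarrow> v \<noteq> None) \<and> (if True then (k < l \<longrightarrow> v \<noteq> None) else (l \<le> k \<and> k < 2*l \<longrightarrow> v \<noteq> None))) k (x3 ! k)" by (auto simp: x3_def N_def lens nth_append)
    fix z assume zl: "length z = N" and zR: "\<forall>k<N. (\<lambda>k v. (v = None \<or> v = Some ((Enc a @ Enc b @ PiPf a b) ! k)) \<and> (2*l \<le> k \<longrightarrow> v \<noteq> None) \<and> (if True then (k < l \<longrightarrow> v \<noteq> None) else (l \<le> k \<and> k < 2*l \<longrightarrow> v \<noteq> None))) k (z ! k)"
    show "G z" using zR by (intro L1[OF a b ab zl, where md=True]) simp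
  qed
  have g4: "goodseq N x3 x4 G"
  proof (rule walk[where R="\<lambda>k v. (v = None \<or> v = Some ((Enc a @ Enc b @ PiPf a b) ! k)) \<and> (2*l \<le> k \<longrightarrow> v \<noteq> None) \<and> (if False then (k < l \<longrightarrow> v \<noteq> None) else (l \<le> k \<and> k < 2*l \<longrightarrow> v \<noteq> None))"])
    show "length x3 = N" by (simp add: x3_def N_def lens)
    show "length x4 = N" by (simp add: x4_def N_def lens)
    show "\<forall>k<N. (\<lambda>k v. (v = None \<or> v = Some ((Enc a @ Enc b @ PiPf a b) ! k)) \<and> (2*l \<le> k \<longrightarrow> v \<noteq> None) \<and> (if False then (k < l \<longrightarrow> v \<noteq> None) else (l \<le> k \<and> k < 2*l \<longrightarrow> v \<noteq> None))) k (x3 ! k)" by (auto simp: x3_def N_def lens nth_append)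
    show "\<forall>k<N. (\<lambda>k v. (v = None \<or> v = Some ((Enc a @ Enc b @ PiPf a b) ! k)) \<and> (2*l \<le> k \<longrightarrow> v \<noteq> None) \<and> (if False then (k < l \<longrightarrow> v \<noteq> None) else (l \<le> k \<and> k < 2*l \<longrightarrow> v \<noteq> None))) k (x4 ! k)" by (auto simp: x4_def N_def lens nth_append)
    fix z assume zl: "length z = N" and zR: "\<forall>k<N. (\<lambda>k v. (v = None \<or> v = Some ((Enc a @ Enc b @ PiPf a b) ! k)) \<and> (2*l \<le> k \<longrightarrow> v \<noteq> None) \<and> (if False then (k < l \<longrightarrow> v \<noteq> None) else (l \<le> k \<and> k < 2*l \<longrightarrow> v \<noteq> None))) k (z ! k)"
    show "G z" using zR by (intro L1[OF a b ab zl, where md=False]) simp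
  qed
  have g5: "goodseq N x4 x5 G"
  proof (rule walk[where R="\<lambda>k v. if False then (k < l \<longrightarrow> v = Some (Enc b ! k)) \<and> (l \<le> k \<and> k < 2*l \<longrightarrow> v = None) else (k < l \<longrightarrow> v = None) \<and> (l \<le> k \<and> k < 2*l \<longrightarrow> v = Some (Enc b ! (k - l)))"])
    show "length x4 = N" by (simp add: x4_def N_def lens)
    show "length x5 = N" by (simp add: x5_def N_def lens)
    show "\<forall>k<N. (\<lambda>k v. if False then (k < l \<longrightarrow> v = Some (Enc b ! k)) \<and> (l \<le> k \<and> k < 2*l \<longrightarrow> v = None) else (k < l \<longrightarrow> v = None) \<and> (l \<le> k \<and> k < 2*l \<longrightarrow> v = Some (Enc b ! (k - l)))) k (x4 ! k)" by (auto simp: x4_def N_def lens nth_append)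
    show "\<forall>k<N. (\<lambda>k v. if False then (k < l \<longrightarrow> v = Some (Enc b ! k)) \<and> (l \<le> k \<and> k < 2*l \<longrightarrow> v = None) else (k < l \<longrightarrow> v = None) \<and> (l \<le> k \<and> k < 2*l \<longrightarrow> v = Some (Enc b ! (k - l)))) k (x5 ! k)" by (auto simp: x5_def N_def lens nth_append)
    fix z assume zl: "length z = N" and zR: "\<forall>k<N. (\<lambda>k v. if False then (k < l \<longrightarrow> v = Some (Enc b ! k)) \<and> (l \<le> k \<and> k < 2*l \<longrightarrow> v = None) else (k < l \<longrightarrow> v = None) \<and> (l \<le> k \<and> k < 2*l \<longrightarrow> v = Some (Enc b ! (k - l)))) k (z ! k)"
    show "G z" using zR by (intro L2[OF b zl, where md=False]) simp
  qed
  have g6: "goodseq N x5 x6 G"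
  proof (rule walk[where R="\<lambda>k v. (v = None \<or> v = Some ((Enc b @ Enc b @ PiPf b b) ! k)) \<and> (2*l \<le> k \<longrightarrow> v \<noteq> None) \<and> (if False then (k < l \<longrightarrow> v \<noteq> None) else (l \<le> k \<and> k < 2*l \<longrightarrow> v \<noteq> None))"])
    show "length x5 = N" by (simp add: x5_def N_def lens)
    show "length x6 = N" by (simp add: x6_def N_def lens)
    show "\<forall>k<N. (\<lambda>k v. (v = None \<or> v = Some ((Enc b @ Enc b @ PiPf b b) ! k)) \<and> (2*l \<le> k \<longrightarrow> v \<noteq> None) \<and> (if False then (k < l \<longrightarrow> v \<noteq> None) else (l \<le> k \<and> k < 2*l \<longrightarrow> v \<noteq> None))) k (x5 ! k)" by (auto simp: x5_def N_def lens nth_append)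
    show "\<forall>k<N. (\<lambda>k v. (v = None \<or> v = Some ((Enc b @ Enc b @ PiPf b b) ! k)) \<and> (2*l \<le> k \<longrightarrow> v \<noteq> None) \<and> (if False then (k < l \<longrightarrow> v \<noteq> None) else (l \<le> k \<and> k < 2*l \<longrightarrow> v \<noteq> None))) k (x6 ! k)" by (auto simp: x6_def N_def lens nth_append)
    fix z assume zl: "length z = N" and zR: "\<forall>k<N. (\<lambda>k v. (v = None \<or> v = Some ((Enc b @ Enc b @ PiPf b b) ! k)) \<and> (2*l \<le> k \<longrightarrow> v \<noteq> None) \<and> (if False then (k < l \<longrightarrow> v \<noteq> None) else (l \<le> k \<and> k < 2*l \<longrightarrow> v \<noteq> None))) k (z ! k)"
    show "G z" using zR by (intro L1[OF b b bb zl, where md=False]) simp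
  qed
    have "goodseq N x0 x6 G"
      using goodseq_trans[OF goodseq_trans[OF goodseq_trans[OF goodseq_trans[OF goodseq_trans[OF g1 g2] g3] g4] g5] g6] .
    then show ?thesis by (simp add: x0_def x6_def)
  qed
  have path: "as \<noteq> [] \<longrightarrow> (\<forall>x\<in>set as. length x = n) \<longrightarrow> successively (ckt_step S) as \<longrightarrow>
      goodseq N (map Some (Enc (hd as) @ Enc (hd as) @ PiPf (hd as) (hd as)))
                (map Some (Enc (last as) @ Enc (last as) @ PiPf (last as) (last as))) G" for as
  proof (induction as)
    case Nil then show ?case by simp
  next
    case (Cons a as)
    show ?case
    proof (intro impI)
      assume ne: "a # as \<noteq> []" and len: "\<forall>x\<in>set (a # as). length x = n"
        and suc: "successively (ckt_step S) (a # as)"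
      show "goodseq N (map Some (Enc (hd (a # as)) @ Enc (hd (a # as)) @ PiPf (hd (a # as)) (hd (a # as))))
          (map Some (Enc (last (a # as)) @ Enc (last (a # as)) @ PiPf (last (a # as)) (last (a # as)))) G"
      proof (cases "as = []")
        case True
        have "ckt_step S a a" by (simp add: ckt_step_def)
        then show ?thesis using trans[of a a] len True by simp
      next
        case False
        have s1: "ckt_step S a (hd as)" and s2: "successively (ckt_step S) as"
          using suc False by (simp_all add: successively_Cons)
        have "goodseq N (map Some (Enc (hd as) @ Enc (hd as) @ PiPf (hd as) (hd as)))
                (map Some (Enc (last as) @ Enc (last as) @ PiPf (last as) (last as))) G"
          using Cons.IH False len s2 by simp
        moreover have "goodseq N (map Some (Enc a @ Enc a @ PiPf a a))
                (map Some (Enc (hd as) @ Enc (hd as) @ PiPf (hd as) (hd as))) G"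
          using trans[OF _ _ s1] len False by simp
        ultimately show ?thesis using False goodseq_trans by fastforce
      qed
    qed
  qed
  obtain as where as: "as \<noteq> []" "hd as = replicate n False" "last as = replicate n True"
    "\<forall>a\<in>set as. length a = n" "\<forall>t. Suc t < length as \<longrightarrow> ckt_step S (as ! t) (as ! Suc t)"
    using assms(4) unfolding SGR_yes_def by blast
  have "successively (ckt_step S) as" using as(5) by (simp add: successively_conv_nth)
  then have "goodseq N (map Some (Enc (replicate n False) @ Enc (replicate n False) @
                       PiPf (replicate n False) (replicate n False)))
            (map Some (Enc (replicate n True) @ Enc (replicate n True) @
                       PiPf (replicate n True) (replicate n True))) G"
    using path[of as] as by simp
  then show ?thesis unfolding goodseq_def G_def N_def by blast
qed
end
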